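(* Let $k$ be a field, $A,B$ abelian groups, $R$ an $A$-graded $k$-algebra and $t:A\times B\to k^\times$ a bicharacter. For $f\in\mathrm{HH}^m(R,R_{\hat b})^a$ and $f'\in\mathrm{HH}^{m'}(R,R_{\hat{b'}})^{a'}$ one has \[ f\smile_t f'=(-1)^{mm'}t(a',b)\,f'\smile_t f . \] In particular, $f\smile_t f'=0$ unless $t(a',b)=t(a,b')^{-1}$.
   Context: Bicharacter: $t(a+a',b)=t(a,b)t(a',b)$ and $t(a,b+b')=t(a,b)t(a,b')$. For $b\in B$, $\hat b$ is the algebra automorphism of $R$ with $\hat b(r)=t(a,b)r$ for $r\in R^a$. $R_{\hat b}$ is the $R$-bimodule $R$ with the usual left action and right action $x\cdot r=x\hat b(r)$. Hochschild cochains $C^m(R,R_{\hat b})=\mathrm{Hom}_k(R^{\otimes m},R)$ carry the standard Hochschild differential for the bimodule $R_{\hat b}$; a cochain has $A$-degree $a$ if it maps $(R^{\otimes m})^{a'}$ into $R^{a+a'}$, and $\mathrm{HH}^*(R,R_{\hat b})^a$ is the cohomology of the degree-$a$ subcomplex. Twisted cup product: for $f\in C^m(R,R_{\hat b})$ and $f'\in C^{m'}(R,R_{\hat{b'}})$, $f\smile_t f'\in C^{m+m'}(R,R_{\widehat{b+b'}})$ is \[(f\smile_tf')[r_1|\cdots|r_{m+m'}]=(-1)^{mm'}f[r_1|\cdots|r_m]\,\hat b\big(f'[r_{m+1}|\cdots|r_{m+m'}]\big);\] this induces an associative product on $\bigoplus_{b\in B}\mathrm{HH}^*(R,R_{\hat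 b})$. *)

theory Defs
  imports Main "HOL.Vector_Spaces"
begin

definition k_algebra :: "('k::field \<Rightarrow> 'r::ring_1 \<Rightarrow> 'r) \<Rightarrow> bool" where
  "k_algebra sm \<longleftrightarrow> vector_space sm \<and>
     (\<forall>c x y. sm c (x * y) = sm c x * y \<and> sm c (x * y) = x * sm c y)"

definition graded_k_algebra ::
  "('k::field \<Rightarrow> 'r::ring_1 \<Rightarrow> 'r) \<Rightarrow> ('a::ab_group_add \<Rightarrow> 'r set) \<Rightarrow> bool" where
  "graded_k_algebra sm Rg \<longleftrightarrow> k_algebra sm \<and>
     (\<forall>a. 0 \<in> Rg a \<and> (\<forall>x\<in>Rg a. \<forall>y\<in>Rg a. x + y \<in> Rg a) \<and> (\<forall>c. \<forall>x\<in>Rg a. sm c x \<in> Rg a)) \<and>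
     1 \<in> Rg 0 \<and>
     (\<forall>a a'. \<forall>x\<in>Rg a. \<forall>y\<in>Rg a'. x * y \<in> Rg (a + a')) \<and>
     (\<forall>r. \<exists>!c. finite {a. c a \<noteq> 0} \<and> (\<forall>a. c a \<in> Rg a) \<and> r = (\<Sum>a\<in>{a. c a \<noteq> 0}. c a))"

definition components :: "('a \<Rightarrow> 'r::ring_1 set) \<Rightarrow> 'r \<Rightarrow> 'a \<Rightarrow> 'r" where
  "components Rg r = (THE c. finite {a. c a \<noteq> 0} \<and> (\<forall>a. c a \<in> Rg a) \<and> r = (\<Sum>a\<in>{a. c a \<noteq> 0}. c a))"

definition bicharacter :: "('a::ab_group_add \<Rightarrow> 'b::ab_group_add \<Rightarrow> 'k::field) \<Rightarrow> bool" where
  "bicharacter t \<longleftrightarrow> (\<forall>a b. t a b \<noteq> 0) \<and>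
     (\<forall>a a' b. t (a + a') b = t a b * t a' b) \<and> (\<forall>a b b'. t a (b + b') = t a b * t a b')"

definition bhat :: "('k::field \<Rightarrow> 'r::ring_1 \<Rightarrow> 'r) \<Rightarrow> ('a \<Rightarrow> 'r set) \<Rightarrow> ('a \<Rightarrow> 'b \<Rightarrow> 'k) \<Rightarrow> 'b \<Rightarrow> 'r \<Rightarrow> 'r" where
  "bhat sm Rg t b r = (\<Sum>a\<in>{a. components Rg r a \<noteq> 0}. sm (t a b) (components Rg r a))"

text \<open>An m-cochain in C^m(R,M) = Hom_k(R^{\<otimes>m}, R) is represented (via the universal
  property of the tensor power) as a k-multilinear function of lists of length m;
  it is required to vanish on lists of any other length.\<close>
definition cochain :: "('k::field \<Rightarrow> 'r::ring_1 \<Rightarrow> 'r) \<Rightarrow> nat \<Rightarrow> ('r list \<Rightarrow> 'r) \<Rightarrow> bool" where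
  "cochain sm m f \<longleftrightarrow> (\<forall>xs. length xs \<noteq> m \<longrightarrow> f xs = 0) \<and>
     (\<forall>xs i x y c. length xs = m \<longrightarrow> i < m \<longrightarrow>
        f (xs[i := x + y]) = f (xs[i := x]) + f (xs[i := y]) \<and>
        f (xs[i := sm c x]) = sm c (f (xs[i := x])))"

definition cochain_deg :: "('a::ab_group_add \<Rightarrow> 'r::ring_1 set) \<Rightarrow> nat \<Rightarrow> 'a \<Rightarrow> ('r list \<Rightarrow> 'r) \<Rightarrow> bool" where
  "cochain_deg Rg m a f \<longleftrightarrow> (\<forall>xs ds. length xs = m \<longrightarrow> length ds = m \<longrightarrow>
      (\<forall>j<m. xs ! j \<in> Rg (ds ! j)) \<longrightarrow> f xs \<in> Rg (a + sum_list ds))"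

text \<open>Hochschild differential C^m(R,R_\<sigma>) \<rightarrow> C^{m+1}(R,R_\<sigma>) for the bimodule R_\<sigma>
  (usual left action, right action x\<cdot>r = x \<sigma>(r)).\<close>
definition hoch_diff :: "('r::ring_1 \<Rightarrow> 'r) \<Rightarrow> nat \<Rightarrow> ('r list \<Rightarrow> 'r) \<Rightarrow> 'r list \<Rightarrow> 'r" where
  "hoch_diff \<sigma> m f xs = (if length xs = Suc m then
      xs ! 0 * f (drop 1 xs)
      + (\<Sum>i\<in>{1..m}. (-1) ^ i * f (take (i - 1) xs @ [xs ! (i - 1) * xs ! i] @ drop (i + 1) xs))
      + (-1) ^ (Suc m) * (f (take m xs) * \<sigma> (xs ! m))
    else 0)"

definition hoch_cocycle ::
  "('k::field \<Rightarrow> 'r::ring_1 \<Rightarrow> 'r) \<Rightarrow> ('a::ab_group_add \<Rightarrow> 'r set) \<Rightarrow> ('r \<Rightarrow> 'r) \<Rightarrow> nat \<Rightarrow> 'a \<Rightarrow> ('r list \<Rightarrow> 'r) \<Rightarrow> bool" where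
  "hoch_cocycle sm Rg \<sigma> m a f \<longleftrightarrow> cochain sm m f \<and> cochain_deg Rg m a f \<and> hoch_diff \<sigma> m f = (\<lambda>_. 0)"

definition hoch_cohomologous ::
  "('k::field \<Rightarrow> 'r::ring_1 \<Rightarrow> 'r) \<Rightarrow> ('a::ab_group_add \<Rightarrow> 'r set) \<Rightarrow> ('r \<Rightarrow> 'r) \<Rightarrow> nat \<Rightarrow> 'a
     \<Rightarrow> ('r list \<Rightarrow> 'r) \<Rightarrow> ('r list \<Rightarrow> 'r) \<Rightarrow> bool" where
  "hoch_cohomologous sm Rg \<sigma> m a f g \<longleftrightarrow>
     (if m = 0 then f = g
      else (\<exists>h. cochain sm (m - 1) h \<and> cochain_deg Rg (m - 1) a h \<and>
                 (\<lambda>xs. f xs - g xs) = hoch_diff \<sigma> (m - 1) h))"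

definition twisted_cup ::
  "('k::field \<Rightarrow> 'r::ring_1 \<Rightarrow> 'r) \<Rightarrow> ('a \<Rightarrow> 'r set) \<Rightarrow> ('a \<Rightarrow> 'b \<Rightarrow> 'k) \<Rightarrow> nat \<Rightarrow> 'b \<Rightarrow> ('r list \<Rightarrow> 'r)
     \<Rightarrow> nat \<Rightarrow> ('r list \<Rightarrow> 'r) \<Rightarrow> 'r list \<Rightarrow> 'r" where
  "twisted_cup sm Rg t m b f m' f' xs = (if length xs = m + m' then
      (-1) ^ (m * m') * (f (take m xs) * bhat sm Rg t b (f' (drop m xs)))
    else 0)"

end

theory Submission
  imports Defs
begin


locale gsetup =
  fixes sm :: "'k::field \<Rightarrow> 'r::ring_1 \<Rightarrow> 'r" and Rg :: "'a::ab_group_add \<Rightarrow> 'r set"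
    and t :: "'a \<Rightarrow> 'b::ab_group_add \<Rightarrow> 'k"
  assumes gr: "graded_k_algebra sm Rg" and bc: "bicharacter t"
begin

lemma vs: "vector_space sm" using gr unfolding graded_k_algebra_def k_algebra_def by auto

sublocale V: vector_space sm by (rule vs)

lemma sm_mult1: "sm c (x * y) = sm c x * y" using gr unfolding graded_k_algebra_def k_algebra_def by auto
lemma sm_mult2: "sm c (x * y) = x * sm c y" using gr unfolding graded_k_algebra_def k_algebra_def by blast

lemma Rg0: "0 \<in> Rg a" using gr unfolding graded_k_algebra_def by auto
lemma Rg_add: "x \<in> Rg a \<Longrightarrow> y \<in> Rg a \<Longrightarrow> x + y \<in> Rg a" using gr unfolding graded_k_algebra_def by auto
lemma Rg_sm: "x \<in> Rg a \<Longrightarrow> sm c x \<in> Rg a" using gr unfolding graded_k_algebra_def by auto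
lemma Rg_one: "1 \<in> Rg 0" using gr unfolding graded_k_algebra_def by auto
lemma Rg_mult: "x \<in> Rg a \<Longrightarrow> y \<in> Rg a' \<Longrightarrow> x * y \<in> Rg (a + a')" using gr unfolding graded_k_algebra_def by auto
lemma Rg_uminus: "x \<in> Rg a \<Longrightarrow> - x \<in> Rg a"
  using Rg_sm[of x a "-1"] by simp
lemma Rg_sum: "(\<And>i. i \<in> I \<Longrightarrow> g i \<in> Rg a) \<Longrightarrow> sum g I \<in> Rg a"
  by (induction I rule: infinite_finite_induct) (auto simp: Rg0 Rg_add)

definition P where "P c r \<longleftrightarrow> finite {a. c a \<noteq> 0} \<and> (\<forall>a. c a \<in> Rg a) \<and> r = (\<Sum>a\<in>{a. c a \<noteq> 0}. c a)"

lemma ex1P: "\<exists>!c. P c r" using gr unfolding graded_k_algebra_def P_def by auto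

lemma compP: "P (components Rg r) r"
  using theI'[OF ex1P[of r]] unfolding components_def P_def by simp

lemma comp_unique: "P c r \<Longrightarrow> components Rg r = c"
  using ex1P[of r] compP[of r] by blast

abbreviation comp where "comp r \<equiv> components Rg r"
definition supp where "supp r = {a. comp r a \<noteq> 0}"

lemma supp_finite: "finite (supp r)" using compP[of r] unfolding P_def supp_def by auto
lemma comp_in: "comp r a \<in> Rg a" using compP[of r] unfolding P_def by auto
lemma comp_sum: "r = (\<Sum>a\<in>supp r. comp r a)" using compP[of r] unfolding P_def supp_def by auto
lemma comp_sum_S: "finite S \<Longrightarrow> supp r \<subseteq> S \<Longrightarrow> r = (\<Sum>a\<in>S. comp r a)"
  using comp_sum[of r] by (simp add: sum.mono_neutral_right supp_def)

lemma comp_eqI: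
  assumes "finite S" "\<And>a. c a \<in> Rg a" "\<And>a. a \<notin> S \<Longrightarrow> c a = 0" "r = (\<Sum>a\<in>S. c a)"
  shows "comp r = c"
proof (rule comp_unique)
  have fin: "finite {a. c a \<noteq> 0}" using assms(1,3) by (metis (mono_tags, lifting) finite_subset mem_Collect_eq subsetI)
  have "(\<Sum>a\<in>S. c a) = (\<Sum>a\<in>{a. c a \<noteq> 0}. c a)"
    using assms(1,3) by (intro sum.mono_neutral_cong_right) auto
  then show "P c r" unfolding P_def using assms fin by auto
qed

lemma comp_homog: "x \<in> Rg d \<Longrightarrow> comp x = (\<lambda>a. if a = d then x else 0)"
  by (rule comp_eqI[of "{d}"]) (auto simp: Rg0)

lemma comp_add: "comp (x + y) = (\<lambda>a. comp x a + comp y a)"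
proof (rule comp_eqI[of "supp x \<union> supp y"])
  show "finite (supp x \<union> supp y)" by (simp add: supp_finite)
  show "comp x a + comp y a \<in> Rg a" for a by (simp add: Rg_add comp_in)
  show "a \<notin> supp x \<union> supp y \<Longrightarrow> comp x a + comp y a = 0" for a by (simp add: supp_def)
  show "x + y = (\<Sum>a\<in>supp x \<union> supp y. comp x a + comp y a)"
    by (simp add: sum.distrib comp_sum_S[symmetric] supp_finite)
qed

lemma comp_sm: "comp (sm c x) = (\<lambda>a. sm c (comp x a))"
proof (rule comp_eqI[of "supp x"])
  show "finite (supp x)" by (simp add: supp_finite)
  show "sm c (comp x a) \<in> Rg a" for a by (simp add: Rg_sm comp_in)
  show "a \<notin> supp x \<Longrightarrow> sm c (comp x a) = 0" for a by (simp add: supp_def)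
  show "sm c x = (\<Sum>a\<in>supp x. sm c (comp x a))"
    by (subst comp_sum) (simp add: V.scale_sum_right)
qed

lemma comp_zero: "comp 0 = (\<lambda>a. 0)"
  using comp_homog[OF Rg0[of 0]] by auto

lemma bhat_S: "finite S \<Longrightarrow> supp r \<subseteq> S \<Longrightarrow> bhat sm Rg t b r = (\<Sum>a\<in>S. sm (t a b) (comp r a))"
  unfolding bhat_def supp_def[symmetric]
  by (rule sum.mono_neutral_left) (auto simp: supp_def)

lemma bhat_homog: "x \<in> Rg d \<Longrightarrow> bhat sm Rg t b x = sm (t d b) x"
  by (subst bhat_S[of "{d}"]) (auto simp: supp_def comp_homog)

lemma bhat_add: "bhat sm Rg t b (x + y) = bhat sm Rg t b x + bhat sm Rg t b y"
proof -
  let ?S = "supp x \<union> supp y"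
  have f: "finite ?S" by (simp add: supp_finite)
  have "supp (x+y) \<subseteq> ?S" by (auto simp: supp_def comp_add)
  then show ?thesis
    by (simp add: bhat_S[OF f] comp_add V.scale_right_distrib sum.distrib)
qed

lemma bhat_sm: "bhat sm Rg t b (sm c x) = sm c (bhat sm Rg t b x)"
proof -
  have "supp (sm c x) \<subseteq> supp x" by (auto simp: supp_def comp_sm)
  then have "bhat sm Rg t b (sm c x) = (\<Sum>a\<in>supp x. sm (t a b) (comp (sm c x) a))"
    by (rule bhat_S[OF supp_finite])
  also have "\<dots> = sm c (\<Sum>a\<in>supp x. sm (t a b) (comp x a))"
    by (simp add: comp_sm V.scale_sum_right mult.commute)
  finally show ?thesis by (simp add: bhat_S[OF supp_finite order_refl])
qed

lemma bhat_zero: "bhat sm Rg t b 0 = 0"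
  by (simp add: bhat_def comp_zero)

lemma bhat_sum: "bhat sm Rg t b (sum g I) = (\<Sum>i\<in>I. bhat sm Rg t b (g i))"
  by (induction I rule: infinite_finite_induct) (auto simp: bhat_zero bhat_add)

lemma bhat_Rg: "x \<in> Rg d \<Longrightarrow> bhat sm Rg t b x \<in> Rg d"
  by (simp add: bhat_homog Rg_sm)

lemma t_add1: "t (a + a') b = t a b * t a' b" using bc unfolding bicharacter_def by auto
lemma t_add2: "t a (b + b') = t a b * t a b'" using bc unfolding bicharacter_def by auto
lemma t_nz: "t a b \<noteq> 0" using bc unfolding bicharacter_def by auto
lemma t_zero1: "t 0 b = 1"
  using t_add1[of 0 0 b] t_nz[of 0 b] by simp

lemma bhat_mult: "bhat sm Rg t b (x * y) = bhat sm Rg t b x * bhat sm Rg t b y"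
proof -
  have xy: "x * y = (\<Sum>a\<in>supp x. \<Sum>c\<in>supp y. comp x a * comp y c)"
  proof -
    have "x * y = (\<Sum>a\<in>supp x. comp x a) * (\<Sum>c\<in>supp y. comp y c)"
      using comp_sum[of x] comp_sum[of y] by simp
    then show ?thesis by (simp add: sum_product)
  qed
  have "bhat sm Rg t b (x * y) = (\<Sum>a\<in>supp x. \<Sum>c\<in>supp y. sm (t (a + c) b) (comp x a * comp y c))"
    using bhat_homog[OF Rg_mult[OF comp_in comp_in]] by (simp add: xy bhat_sum)
  also have "\<dots> = (\<Sum>a\<in>supp x. \<Sum>c\<in>supp y. sm (t a b) (comp x a) * sm (t c b) (comp y c))"
    by (simp add: t_add1 sm_mult1 sm_mult2[symmetric] mult.commute)
  also have "\<dots> = bhat sm Rg t b x * bhat sm Rg t b y"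
    by (simp add: bhat_S[OF supp_finite order_refl] sum_product)
  finally show ?thesis .
qed

lemma bhat_comp2: "bhat sm Rg t (b + b') x = bhat sm Rg t b' (bhat sm Rg t b x)"
proof -
  have e: "bhat sm Rg t b x = (\<Sum>a\<in>supp x. sm (t a b) (comp x a))"
    by (rule bhat_S[OF supp_finite order_refl])
  have "bhat sm Rg t b' (bhat sm Rg t b x) = (\<Sum>a\<in>supp x. bhat sm Rg t b' (sm (t a b) (comp x a)))"
    unfolding e by (rule bhat_sum)
  also have "\<dots> = (\<Sum>a\<in>supp x. sm (t a (b + b')) (comp x a))"
    using bhat_homog[OF comp_in] by (simp add: bhat_sm t_add2 mult.commute)
  finally show ?thesis by (simp add: bhat_S[OF supp_finite order_refl])
qed

end


definition merge :: "nat \<Rightarrow> 'r::ring_1 list \<Rightarrow> 'r list" where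
  "merge k xs = take (k - 1) xs @ [xs ! (k - 1) * xs ! k] @ drop (k + 1) xs"

lemma merge_len: "1 \<le> k \<Longrightarrow> k < length X \<Longrightarrow> length (merge k X) = length X - 1"
  by (simp add: merge_def)

lemma merge_nth: "1 \<le> k \<Longrightarrow> k < length X \<Longrightarrow> j < length X - 1 \<Longrightarrow>
   merge k X ! j = (if j < k - 1 then X ! j else if j = k - 1 then X ! (k - 1) * X ! k else X ! (j + 1))"
  by (auto simp: merge_def nth_append)

lemma merge_app1: "k < length A \<Longrightarrow> 1 \<le> k \<Longrightarrow> merge k (A @ B) = merge k A @ B"
  by (intro nth_equalityI) (auto simp: merge_len merge_nth nth_append)

lemma merge_app2: "length A < k \<Longrightarrow> k < length A + length B \<Longrightarrow> merge k (A @ B) = A @ merge (k - length A) B"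
proof -
  assume a: "length A < k" "k < length A + length B"
  obtain l where l: "k = length A + l" "1 \<le> l" using a by (intro that[of "k - length A"]) auto
  show ?thesis unfolding l(1) using l(2) by (cases l) (simp_all add: merge_def nth_append)
qed

lemma merge_take: "1 \<le> k \<Longrightarrow> k < n \<Longrightarrow> n \<le> length X \<Longrightarrow> take (n - 1) (merge k X) = merge k (take n X)"
  by (intro nth_equalityI) (auto simp: merge_len merge_nth)

lemma merge_drop_before: "1 \<le> k \<Longrightarrow> k < n \<Longrightarrow> n \<le> length X \<Longrightarrow> drop (n - 1) (merge k X) = drop n X"
  by (intro nth_equalityI) (auto simp: merge_len merge_nth)

lemma merge_drop_after: "i < k \<Longrightarrow> k < length X \<Longrightarrow> drop i (merge k X) = merge (k - i) (drop i X)"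
  by (intro nth_equalityI) (auto simp: merge_len merge_nth)

lemma merge_take_low: "i < k \<Longrightarrow> 1 \<le> k \<Longrightarrow> k < length X \<Longrightarrow> take i (merge k X) = take i X"
  by (simp add: merge_def min_def le_diff_conv2)


lemma merge_map: "1 \<le> k \<Longrightarrow> k < length X \<Longrightarrow> (\<And>x y. f (x * y) = f x * f y) \<Longrightarrow> merge k (map f X) = map f (merge k X)"
  by (intro nth_equalityI) (auto simp: merge_len merge_nth)

locale lists =
  fixes h :: "'r::ring_1 list \<Rightarrow> 'r" and \<sigma> :: "'r \<Rightarrow> 'r" and p :: nat
begin

definition Yf where "Yf j X = take j X @ [h (take p (drop j X))] @ map \<sigma> (drop (j + p) X)"
definition Uf where "Uf i X y = take i X @ [y] @ map \<sigma> (drop (i + p + 1) X)"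
definition Vf where "Vf i X = take (p + 1) (drop i X)"

lemma len_Yf: "j + p \<le> length X \<Longrightarrow> length (Yf j X) = length X - p + 1"
  by (simp add: Yf_def)

lemma len_Uf: "i + p < length X \<Longrightarrow> length (Uf i X y) = length X - p"
  by (simp add: Uf_def)

lemma Uf_upd: "i < length X \<Longrightarrow> Uf i X y = (Uf i X z)[i := y]"
  by (simp add: Uf_def list_update_append)

lemma LY0: "Yf (Suc i) X ! 0 = X ! 0" if "Suc i + p \<le> length X"
  using that by (simp add: Yf_def nth_append)

lemma LY1: "drop 1 (Yf (Suc i) X) = Yf i (drop 1 X)" if "Suc i + p \<le> length X"
  using that by (simp add: Yf_def drop_Cons' take_Suc drop_take)

lemma LM1: "merge k (Yf (Suc i) X) = Yf i (merge k X)" if "1 \<le> k" "k \<le> i" "Suc i + p \<le> length X"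
proof -
  have 1: "take i (merge k X) = merge k (take (Suc i) X)"
    using merge_take[of k "Suc i" X] that by simp
  have 2: "drop i (merge k X) = drop (Suc i) X"
    using merge_drop_before[of k "Suc i" X] that by simp
  have 3: "drop (i + p) (merge k X) = drop (Suc i + p) X"
    using merge_drop_before[of k "Suc i + p" X] that by simp
  have 4: "merge k (Yf (Suc i) X) = merge k (take (Suc i) X) @ [h (take p (drop (Suc i) X))] @ map \<sigma> (drop (Suc i + p) X)"
    unfolding Yf_def using that by (subst merge_app1) auto
  show ?thesis unfolding 4 by (simp add: Yf_def 1 2 3)
qed

lemma LM3: "merge (k + 1 - p) (Yf i X) = Yf i (merge k X)"
  if "i + p + 1 \<le> k" "k < length X" "\<And>x y. \<sigma> (x * y) = \<sigma> x * \<sigma> y"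
proof -
  have 1: "take i (merge k X) = take i X"
    using merge_take_low[of i k X] that by simp
  have 2: "take p (drop i (merge k X)) = take p (drop i X)"
    using merge_drop_after[of i k X] merge_take_low[of p "k - i" "drop i X"] that by simp
  have 3: "drop (i + p) (merge k X) = merge (k - i - p) (drop (i + p) X)"
    using merge_drop_after[of "i + p" k X] that by simp
  have 4: "merge (k + 1 - p) (Yf i X) = (take i X @ [h (take p (drop i X))]) @ merge (k + 1 - p - (i + 1)) (map \<sigma> (drop (i + p) X))"
  proof -
    have "merge (k + 1 - p) ((take i X @ [h (take p (drop i X))]) @ map \<sigma> (drop (i + p) X)) = 
      (take i X @ [h (take p (drop i X))]) @ merge (k + 1 - p - length (take i X @ [h (take p (drop i X))])) (map \<sigma> (drop (i + p) X))"
      by (rule merge_app2) (use that in auto)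
    moreover have "k + 1 - p - (i + 1) = k - i - p" by simp
    ultimately show ?thesis using that by (simp add: Yf_def add.commute[of p i])
  qed
  have 5: "merge (k + 1 - p - (i + 1)) (map \<sigma> (drop (i + p) X)) = map \<sigma> (merge (k - i - p) (drop (i + p) X))"
  proof -
    have e: "k + 1 - p - (i + 1) = k - i - p" by simp
    show ?thesis unfolding e using that by (intro merge_map) auto
  qed
  show ?thesis unfolding 4 5 by (simp add: Yf_def 1 2 3)
qed

lemma LT3a: "take q (Yf i X) = Yf i (take (p + q - 1) X)" if "i < q" "length X = p + q"
proof -
  have "take p (drop i (take (p + q - 1) X)) = take p (drop i X)"
    using that by (simp add: drop_take take_take)
  moreover have "take i (take (p + q - 1) X) = take i X" using that by simp
  moreover have "take (q - Suc i) (drop (i + p) X) = drop (i + p) (take (p + q - 1) X)"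
    using that by (simp add: drop_take add.commute)
  moreover have "q - i = Suc (q - Suc i)" using that by simp
  ultimately show ?thesis using that by (simp add: Yf_def take_map)
qed

lemma LT3b: "Yf i X ! q = \<sigma> (X ! (p + q - 1))" if "i < q" "length X = p + q"
  using that by (simp add: Yf_def nth_append)

lemma LM2: "Yf i (merge k X) = Uf i X (h (merge (k - i) (Vf i X)))"
  if "i + 1 \<le> k" "k \<le> i + p" "length X = p + q" "i < q"
proof -
  have 1: "take i (merge k X) = take i X"
    using merge_take_low[of i k X] that by simp
  have 2: "take p (drop i (merge k X)) = merge (k - i) (Vf i X)"
    using merge_drop_after[of i k X] merge_take[of "k - i" "p + 1" "drop i X"] that by (simp add: Vf_def)
  have 3: "drop (i + p) (merge k X) = drop (i + p + 1) X"
    using merge_drop_before[of k "i + p + 1" X] that by simp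
  show ?thesis by (simp add: Yf_def Uf_def 1 2 3)
qed

lemma LC: "merge j (Yf j X) = Uf (j - 1) X (X ! (j - 1) * h (drop 1 (Vf (j - 1) X)))"
  if "1 \<le> j" "j \<le> q" "length X = p + q"
proof -
  have "drop 1 (Vf (j - 1) X) = take p (drop j X)" using that by (simp add: Vf_def drop_take)
  then show ?thesis using that by (simp add: Yf_def Uf_def merge_def nth_append)
qed

lemma LD: "merge (j + 1) (Yf j X) = Uf j X (h (take p (Vf j X)) * \<sigma> (Vf j X ! p))"
  if "j < q" "length X = p + q"
  using that by (simp add: Yf_def Uf_def Vf_def merge_def nth_append add.commute drop_map[symmetric] del: drop_map)

lemma LL: "Yf 0 X ! 0 = h (take p X)" "drop 1 (Yf 0 X) = map \<sigma> (drop p X)"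
  by (auto simp: Yf_def)

lemma LMM: "take q (Yf q X) = take q X" "Yf q X ! q = h (drop q X)" if "length X = p + q"
  using that by (auto simp: Yf_def nth_append)

end



lemma lin_comb:
  fixes P AA AS x y C D BT :: "'a::ab_group_add"
  assumes "P = - (AA + AS)" "AA = x + C" "AS = D + y" "BT = C + D"
  shows "P + BT = - x - y"
proof -
  have "P + BT = - (x + C + (D + y)) + (C + D)" by (simp only: assms)
  also have "\<dots> = - x - y" by (simp add: algebra_simps)
  finally show ?thesis .
qed

lemma neg1_eq: "even (a + b) \<Longrightarrow> (-1::'a::ring_1) ^ a = (-1) ^ b"
  by (auto simp: minus_one_power_iff)

definition dterm :: "('r::ring_1 \<Rightarrow> 'r) \<Rightarrow> nat \<Rightarrow> ('r list \<Rightarrow> 'r) \<Rightarrow> 'r list \<Rightarrow> nat \<Rightarrow> 'r" where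
  "dterm \<rho> m \<phi> xs k = (if k = 0 then xs ! 0 * \<phi> (drop 1 xs)
     else if k = Suc m then (-1) ^ (Suc m) * (\<phi> (take m xs) * \<rho> (xs ! m))
     else (-1) ^ k * \<phi> (merge k xs))"

lemma hoch_diff_dterm:
  assumes "length xs = Suc m"
  shows "hoch_diff \<rho> m \<phi> xs = (\<Sum>k\<le>Suc m. dterm \<rho> m \<phi> xs k)"
proof -
  have "{..Suc m} = insert 0 (insert (Suc m) {1..m})" by auto
  then have "(\<Sum>k\<le>Suc m. dterm \<rho> m \<phi> xs k) = dterm \<rho> m \<phi> xs 0 + (dterm \<rho> m \<phi> xs (Suc m) + (\<Sum>k\<in>{1..m}. dterm \<rho> m \<phi> xs k))"
    by simp
  also have "(\<Sum>k\<in>{1..m}. dterm \<rho> m \<phi> xs k) = (\<Sum>i\<in>{1..m}. (-1) ^ i * \<phi> (take (i - 1) xs @ [xs ! (i - 1) * xs ! i] @ drop (i + 1) xs))"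
    by (rule sum.cong) (auto simp: dterm_def merge_def)
  finally show ?thesis using assms by (simp add: hoch_diff_def dterm_def algebra_simps)
qed

locale core = lists h \<sigma> p for h :: "'r::ring_1 list \<Rightarrow> 'r" and \<sigma> p +
  fixes g :: "'r list \<Rightarrow> 'r" and \<tau> :: "'r \<Rightarrow> 'r" and q :: nat and X :: "'r list"
  assumes g_add: "length W = q \<Longrightarrow> i < q \<Longrightarrow> g (W[i := x + y]) = g (W[i := x]) + g (W[i := y])"
    and g_zero: "length W = q \<Longrightarrow> i < q \<Longrightarrow> g (W[i := 0]) = 0"
    and \<sigma>_mult: "\<sigma> (x * y) = \<sigma> x * \<sigma> y"
    and dg: "length Y = Suc q \<Longrightarrow> hoch_diff \<tau> q g Y = 0"
    and dh: "length V = Suc p \<Longrightarrow> hoch_diff \<sigma> p h V = 0"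
    and qpos: "1 \<le> q"
    and lenX: "length X = p + q"
begin

lemma g_neg: "length W = q \<Longrightarrow> i < q \<Longrightarrow> g (W[i := - x]) = - g (W[i := x])"
proof -
  assume a: "length W = q" "i < q"
  have "g (W[i := x]) + g (W[i := - x]) = 0" using g_add[OF a, of x "- x"] g_zero[OF a] by simp
  then show ?thesis by (metis neg_eq_iff_add_eq_0)
qed

lemma g_sign: "length W = q \<Longrightarrow> i < q \<Longrightarrow> g (W[i := (-1) ^ l * x]) = (-1) ^ l * g (W[i := x])"
  by (cases "even l") (simp_all add: g_neg)

lemma g_sum: "length W = q \<Longrightarrow> i < q \<Longrightarrow> g (W[i := sum f S]) = (\<Sum>l\<in>S. g (W[i := f l]))"
  by (induction S rule: infinite_finite_induct) (simp_all add: g_zero g_add)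

definition n where "n = p + q - 1"
lemma Suc_n: "Suc n = p + q" using qpos by (simp add: n_def)

definition \<rho> where "\<rho> x = \<tau> (\<sigma> x)"
definition Hi where "Hi i W = g (Yf i W)"
definition E where "E i k = dterm \<rho> n (Hi i) X k"
definition A where "A j k = dterm \<tau> q g (Yf j X) k"
definition B where "B i l = g (Uf i X (dterm \<sigma> p h (Vf i X) l))"
definition L where "L = h (take p X) * g (map \<sigma> (drop p X))"
definition M where "M = g (take q X) * \<tau> (h (drop q X))"

lemma sumA: "j \<le> q \<Longrightarrow> (\<Sum>k\<le>Suc q. A j k) = 0"
  unfolding A_def using dg[of "Yf j X"] hoch_diff_dterm[of "Yf j X" q \<tau> g] len_Yf[of j X] lenX
  by simp

lemma len_Uf': "i < q \<Longrightarrow> length (Uf i X y) = q"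
  using len_Uf[of i X y] lenX by simp

lemma Uf_upd0: "i < q \<Longrightarrow> (Uf i X z)[i := y] = Uf i X y"
  using Uf_upd[of i X y z] lenX by simp

lemma g_Uf_sign: "i < q \<Longrightarrow> g (Uf i X ((-1) ^ l * y)) = (-1) ^ l * g (Uf i X y)"
  using g_sign[of "Uf i X 0" i l y] by (simp add: len_Uf' Uf_upd0)

lemma sumB: "i < q \<Longrightarrow> (\<Sum>l\<le>Suc p. B i l) = 0"
proof -
  assume i: "i < q"
  have lv: "length (Vf i X) = Suc p" using i lenX by (simp add: Vf_def)
  have "(\<Sum>l\<le>Suc p. B i l) = g ((Uf i X 0)[i := (\<Sum>l\<le>Suc p. dterm \<sigma> p h (Vf i X) l)])"
    unfolding B_def using i lenX
    by (subst g_sum) (simp_all add: len_Uf' Uf_upd0)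
  also have "\<dots> = g ((Uf i X 0)[i := 0])"
    using hoch_diff_dterm[OF lv, of \<sigma> h] dh[OF lv] by simp
  also have "\<dots> = 0" using i g_zero[of "Uf i X 0" i] by (simp add: len_Uf')
  finally show ?thesis .
qed

lemma T1: "i < q \<Longrightarrow> k \<le> i \<Longrightarrow> E i k = A (Suc i) k"
  unfolding E_def A_def dterm_def Hi_def using lenX Suc_n LY1[of i X]
  by (auto simp: LY0 LM1)

lemma T2: "i < q \<Longrightarrow> i + 1 \<le> k \<Longrightarrow> k \<le> i + p \<Longrightarrow> E i k = (-1) ^ i * B i (k - i)"
proof -
  assume a: "i < q" "i + 1 \<le> k" "k \<le> i + p"
  have "E i k = (-1) ^ k * g (Uf i X (h (merge (k - i) (Vf i X))))"
    unfolding E_def dterm_def Hi_def using a Suc_n lenX by (simp add: LM2)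
  moreover have "B i (k - i) = (-1) ^ (k - i) * g (Uf i X (h (merge (k - i) (Vf i X))))"
  proof -
    have "dterm \<sigma> p h (Vf i X) (k - i) = (-1) ^ (k - i) * h (merge (k - i) (Vf i X))"
    proof -
      have "k - i \<noteq> 0" "k - i \<noteq> Suc p" using a by auto
      then show ?thesis by (simp add: dterm_def)
    qed
    then show ?thesis by (simp only: B_def g_Uf_sign[OF a(1)])
  qed
  moreover have "(-1::'r) ^ k = (-1) ^ i * (-1) ^ (k - i)"
    using a by (simp add: power_add[symmetric])
  ultimately show ?thesis by (simp add: mult.assoc)
qed

lemma T3: "i < q \<Longrightarrow> i + p + 1 \<le> k \<Longrightarrow> k \<le> p + q \<Longrightarrow> E i k = (-1) ^ (p + 1) * A i (k + 1 - p)"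
proof -
  assume a: "i < q" "i + p + 1 \<le> k" "k \<le> p + q"
  show ?thesis
  proof (cases "k = p + q")
    case True
    have "E i k = (-1) ^ (p + q) * (g (Yf i (take n X)) * \<tau> (\<sigma> (X ! n)))"
      unfolding E_def dterm_def Hi_def \<rho>_def using a True Suc_n by simp
    moreover have "A i (k + 1 - p) = (-1) ^ (Suc q) * (g (Yf i (take n X)) * \<tau> (\<sigma> (X ! n)))"
      unfolding A_def dterm_def using a True lenX by (simp add: LT3a LT3b n_def)
    moreover have "(-1::'r) ^ (p + q) = (-1) ^ (p + 1) * (-1) ^ (Suc q)"
      unfolding power_add[symmetric] by (rule neg1_eq) simp
    ultimately show ?thesis by (simp add: mult.assoc)
  next
    case False
    have "E i k = (-1) ^ k * g (Yf i (merge k X))"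
      unfolding E_def dterm_def Hi_def using a False Suc_n by simp
    moreover have "A i (k + 1 - p) = (-1) ^ (k + 1 - p) * g (Yf i (merge k X))"
    proof -
      have "k + 1 - p \<noteq> 0" "k + 1 - p \<noteq> Suc q" using a False by auto
      moreover have "merge (k + 1 - p) (Yf i X) = Yf i (merge k X)"
        using LM3[of i k X] a False lenX \<sigma>_mult by simp
      ultimately show ?thesis unfolding A_def dterm_def by simp
    qed
    moreover have "(-1::'r) ^ k = (-1) ^ (p + 1) * (-1) ^ (k + 1 - p)"
      unfolding power_add[symmetric] by (rule neg1_eq) (use a in auto)
    ultimately show ?thesis by (simp add: mult.assoc)
  qed
qed

lemma TC: "1 \<le> j \<Longrightarrow> j \<le> q \<Longrightarrow> A j j = (-1) ^ j * B (j - 1) 0"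
proof -
  assume a: "1 \<le> j" "j \<le> q"
  have "Vf (j - 1) X ! 0 = X ! (j - 1)" using a lenX by (simp add: Vf_def)
  then show ?thesis
    unfolding A_def B_def dterm_def using a lenX LC[of j q X] by simp
qed

lemma TD: "j < q \<Longrightarrow> A j (Suc j) = (-1) ^ (Suc j) * (-1) ^ (Suc p) * B j (Suc p)"
proof -
  assume a: "j < q"
  have "A j (Suc j) = (-1) ^ (Suc j) * g (Uf j X (h (take p (Vf j X)) * \<sigma> (Vf j X ! p)))"
    unfolding A_def dterm_def using a lenX LD[of j q X] by simp
  moreover have "B j (Suc p) = (-1) ^ (Suc p) * g (Uf j X (h (take p (Vf j X)) * \<sigma> (Vf j X ! p)))"
  proof -
    have "dterm \<sigma> p h (Vf j X) (Suc p) = (-1) ^ (Suc p) * (h (take p (Vf j X)) * \<sigma> (Vf j X ! p))"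
      by (simp add: dterm_def)
    then show ?thesis by (simp only: B_def g_Uf_sign[OF a(1)])
  qed
  moreover have "(-1::'r) ^ (Suc p) * (-1) ^ (Suc p) = 1"
    unfolding power_add[symmetric] by simp
  then have "\<And>z::'r. (-1) ^ (Suc p) * ((-1) ^ (Suc p) * z) = z"
    by (metis mult.assoc mult_1)
  ultimately show ?thesis by (metis mult.assoc)
qed

lemma TL: "A 0 0 = L"
  unfolding A_def dterm_def L_def using LL[of X] by simp

lemma TM: "A q (Suc q) = (-1) ^ (Suc q) * M"
  unfolding A_def dterm_def M_def using lenX by (simp add: LMM)

definition Pre where "Pre j = (\<Sum>k<j. A j k)"
definition Suf where "Suf j = (\<Sum>k\<in>{j + 2..Suc q}. A j k)"
definition \<epsilon> :: "nat \<Rightarrow> 'r" where "\<epsilon> i = (-1) ^ (i * (p + 1))"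
definition \<rho>s :: "nat \<Rightarrow> 'r" where "\<rho>s j = (-1) ^ ((j + 1) * (p + 1))"

lemma S1: "j \<le> q \<Longrightarrow> Pre j + A j j + A j (Suc j) + Suf j = 0"
proof -
  assume j: "j \<le> q"
  define S where "S = {j + 2..Suc q}"
  have "{..Suc q} = {..<j} \<union> insert j (insert (Suc j) S)" using j unfolding S_def by auto
  then have "(\<Sum>k\<le>Suc q. A j k) = sum (A j) {..<j} + sum (A j) (insert j (insert (Suc j) S))"
    by (simp only:) (rule sum.union_disjoint, auto simp: S_def)
  also have "sum (A j) (insert j (insert (Suc j) S)) = A j j + (A j (Suc j) + sum (A j) S)"
  proof -
    have f: "finite S" "Suc j \<notin> S" "j \<notin> insert (Suc j) S" unfolding S_def by auto
    show ?thesis using sum.insert[OF finite_insert[THEN iffD2, OF f(1)] f(3), of "A j"] sum.insert[OF f(1) f(2), of "A j"]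
      by simp
  qed
  finally have "(\<Sum>k\<le>Suc q. A j k) = Pre j + (A j j + (A j (Suc j) + Suf j))"
    unfolding Pre_def Suf_def S_def .
  then show ?thesis using sumA[OF j] by (simp add: add.assoc)
qed

lemma S2: "i < q \<Longrightarrow> (\<Sum>k\<le>p + q. E i k) = Pre (Suc i) + (-1) ^ i * (- B i 0 - B i (Suc p)) + (-1) ^ (p + 1) * Suf i"
proof -
  assume i: "i < q"
  have split: "{..p + q} = {..i} \<union> ({i + 1..i + p} \<union> {i + p + 1..p + q})" using i by auto
  have "(\<Sum>k\<le>p + q. E i k) = (\<Sum>k\<le>i. E i k) + ((\<Sum>k\<in>{i + 1..i + p}. E i k) + (\<Sum>k\<in>{i + p + 1..p + q}. E i k))"
    unfolding split by (subst sum.union_disjoint, auto)+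
  moreover have "(\<Sum>k\<le>i. E i k) = Pre (Suc i)"
    unfolding Pre_def using i by (simp add: T1 lessThan_Suc_atMost)
  moreover have "(\<Sum>k\<in>{i + 1..i + p}. E i k) = (-1) ^ i * (- B i 0 - B i (Suc p))"
  proof -
    have "(\<Sum>k\<in>{i + 1..i + p}. E i k) = (\<Sum>k\<in>{i + 1..i + p}. (-1) ^ i * B i (k - i))"
      using i by (intro sum.cong) (auto simp: T2)
    also have "\<dots> = (-1) ^ i * (\<Sum>k\<in>{1 + i..p + i}. B i (k - i))"
      by (simp add: sum_distrib_left add.commute)
    also have "(\<Sum>k\<in>{1 + i..p + i}. B i (k - i)) = (\<Sum>l\<in>{1..p}. B i l)"
      by (subst sum.shift_bounds_cl_nat_ivl) simp
    also have "(\<Sum>l\<in>{1..p}. B i l) = - B i 0 - B i (Suc p)"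
    proof -
      have "{..Suc p} = insert 0 (insert (Suc p) {1..p})" by auto
      then have "(\<Sum>l\<le>Suc p. B i l) = B i 0 + (B i (Suc p) + (\<Sum>l\<in>{1..p}. B i l))" by simp
      then show ?thesis using sumB[OF i] by (simp add: algebra_simps eq_neg_iff_add_eq_0)
    qed
    finally show ?thesis .
  qed
  moreover have "(\<Sum>k\<in>{i + p + 1..p + q}. E i k) = (-1) ^ (p + 1) * Suf i"
  proof -
    have "(\<Sum>k\<in>{i + p + 1..p + q}. E i k) = (\<Sum>k\<in>{i + p + 1..p + q}. (-1) ^ (p + 1) * A i (k + 1 - p))"
      using i by (intro sum.cong) (auto simp: T3)
    also have "\<dots> = (-1) ^ (p + 1) * (\<Sum>k\<in>{i + p + 1..p + q}. A i (k + 1 - p))"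
      by (simp add: sum_distrib_left)
    also have "(\<Sum>k\<in>{i + p + 1..p + q}. A i (k + 1 - p)) = Suf i"
      unfolding Suf_def
      by (rule sum.reindex_bij_witness[where i = "\<lambda>k. k + p - 1" and j = "\<lambda>k. k + 1 - p"]) auto
    finally show ?thesis .
  qed
  ultimately show ?thesis by (simp add: add.assoc)
qed

lemma sgn1: "\<rho>s (Suc i) = \<epsilon> i"
proof -
  have "(Suc i + 1) * (p + 1) = i * (p + 1) + 2 * (p + 1)" by simp
  then have "\<rho>s (Suc i) = (-1::'r) ^ (i * (p + 1)) * ((-1) ^ 2) ^ (p + 1)"
    by (simp only: \<rho>s_def power_add power_mult)
  then show ?thesis by (simp add: \<epsilon>_def)
qed

lemma sgn2: "\<epsilon> i * (-1) ^ (p + 1) = \<rho>s i"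
proof -
  have "(i + 1) * (p + 1) = i * (p + 1) + (p + 1)" by simp
  then show ?thesis by (simp only: \<rho>s_def \<epsilon>_def power_add)
qed

lemma sgn3: "\<rho>s j * ((-1) ^ Suc j * (-1) ^ Suc p) = \<epsilon> j * (-1) ^ (Suc j)"
proof -
  have e: "(j + 1) * (p + 1) + (Suc j + Suc p) = (j * (p + 1) + Suc j) + 2 * (p + 1)" by simp
  have "\<rho>s j * ((-1) ^ Suc j * (-1) ^ Suc p) = (-1::'r) ^ ((j + 1) * (p + 1) + (Suc j + Suc p))"
    by (simp only: \<rho>s_def power_add)
  also have "\<dots> = (-1) ^ ((j * (p + 1) + Suc j) + 2 * (p + 1))" by (simp only: e)
  also have "\<dots> = (-1) ^ (j * (p + 1) + Suc j)" by (simp only: power_add power_mult) simp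
  also have "\<dots> = \<epsilon> j * (-1) ^ Suc j" by (simp only: \<epsilon>_def power_add)
  finally show ?thesis .
qed

lemma Pre0: "Pre 0 = 0" by (simp add: Pre_def)
lemma Sufq: "Suf q = 0" by (simp add: Suf_def)

lemma core_id: "(\<Sum>i<q. \<epsilon> i * (\<Sum>k\<le>p + q. E i k)) = - (\<rho>s 0 * L) - \<rho>s q * ((-1) ^ (Suc q) * M)"
proof -
  define Bt where "Bt i = \<epsilon> i * ((-1) ^ i * (- B i 0 - B i (Suc p)))" for i
  have a: "(\<Sum>i<q. \<epsilon> i * (\<Sum>k\<le>p + q. E i k)) = (\<Sum>i<q. \<rho>s (Suc i) * Pre (Suc i)) + (\<Sum>i<q. \<rho>s i * Suf i) + (\<Sum>i<q. Bt i)"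
  proof -
    have "(\<Sum>i<q. \<epsilon> i * (\<Sum>k\<le>p + q. E i k)) = (\<Sum>i<q. \<rho>s (Suc i) * Pre (Suc i) + \<rho>s i * Suf i + Bt i)"
    proof (rule sum.cong[OF refl])
      fix i assume "i \<in> {..<q}"
      then have i: "i < q" by simp
      have hs: "\<epsilon> i * ((-1) ^ (p + 1) * Suf i) = \<rho>s i * Suf i"
        by (simp only: mult.assoc[symmetric] sgn2)
      have "\<epsilon> i * (\<Sum>k\<le>p + q. E i k) = \<epsilon> i * Pre (Suc i) + Bt i + \<epsilon> i * ((-1) ^ (p + 1) * Suf i)"
        unfolding S2[OF i] Bt_def by (simp only: distrib_left)
      then show "\<epsilon> i * (\<Sum>k\<le>p + q. E i k) = \<rho>s (Suc i) * Pre (Suc i) + \<rho>s i * Suf i + Bt i"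
        unfolding sgn1 hs by (metis add.assoc add.commute)
    qed
    then show ?thesis by (simp add: sum.distrib)
  qed
  have b1: "(\<Sum>i<q. \<rho>s (Suc i) * Pre (Suc i)) = (\<Sum>j<Suc q. \<rho>s j * Pre j)"
    using sum.lessThan_Suc_shift[of "\<lambda>j. \<rho>s j * Pre j" q] by (simp add: Pre0)
  have b2: "(\<Sum>i<q. \<rho>s i * Suf i) = (\<Sum>j<Suc q. \<rho>s j * Suf j)"
    by (simp add: Sufq)
  have c: "(\<Sum>j<Suc q. \<rho>s j * Pre j) + (\<Sum>j<Suc q. \<rho>s j * Suf j) = - ((\<Sum>j<Suc q. \<rho>s j * A j j) + (\<Sum>j<Suc q. \<rho>s j * A j (Suc j)))"
  proof -
    have "(\<Sum>j<Suc q. \<rho>s j * Pre j) + (\<Sum>j<Suc q. \<rho>s j * Suf j) = (\<Sum>j<Suc q. - (\<rho>s j * A j j + \<rho>s j * A j (Suc j)))"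
      unfolding sum.distrib[symmetric]
    proof (rule sum.cong[OF refl])
      fix j assume "j \<in> {..<Suc q}"
      then have "Pre j + Suf j = - (A j j + A j (Suc j))" using S1[of j]
        by (simp add: algebra_simps eq_neg_iff_add_eq_0)
      then show "\<rho>s j * Pre j + \<rho>s j * Suf j = - (\<rho>s j * A j j + \<rho>s j * A j (Suc j))"
        by (simp only: distrib_left[symmetric] mult_minus_right)
    qed
    then show ?thesis by (simp only: sum_negf sum.distrib)
  qed
  have d1: "(\<Sum>j<Suc q. \<rho>s j * A j j) = \<rho>s 0 * L + (\<Sum>i<q. \<epsilon> i * ((-1) ^ (Suc i) * B i 0))"
    unfolding sum.lessThan_Suc_shift TL
    by (simp add: TC sgn1)
  have d2: "(\<Sum>j<Suc q. \<rho>s j * A j (Suc j)) = (\<Sum>i<q. \<epsilon> i * ((-1) ^ (Suc i) * B i (Suc p))) + \<rho>s q * ((-1) ^ (Suc q) * M)"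
  proof -
    have "(\<Sum>j<q. \<rho>s j * A j (Suc j)) = (\<Sum>i<q. \<epsilon> i * ((-1) ^ (Suc i) * B i (Suc p)))"
    proof (rule sum.cong[OF refl])
      fix j assume "j \<in> {..<q}"
      then have "\<rho>s j * A j (Suc j) = (\<rho>s j * ((-1) ^ Suc j * (-1) ^ Suc p)) * B j (Suc p)"
        using TD[of j] by (simp add: mult.assoc)
      then show "\<rho>s j * A j (Suc j) = \<epsilon> j * ((-1) ^ (Suc j) * B j (Suc p))"
        unfolding sgn3 by (simp add: mult.assoc)
    qed
    then show ?thesis by (simp add: TM)
  qed
  have e: "(\<Sum>i<q. \<epsilon> i * ((-1) ^ (Suc i) * B i 0)) + (\<Sum>i<q. \<epsilon> i * ((-1) ^ (Suc i) * B i (Suc p))) = (\<Sum>i<q. Bt i)"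
    unfolding sum.distrib[symmetric] Bt_def by (intro sum.cong refl) (simp add: algebra_simps)
  show ?thesis
    unfolding a b1 b2 by (rule lin_comb[OF c d1 d2 e[symmetric]])
qed

definition Hc where "Hc W = (if length W = n then (\<Sum>i<q. \<epsilon> i * Hi i W) else 0)"

lemma neg1_comm: "(-1) ^ k * (x::'r) = x * (-1) ^ k"
  by (cases "even k") simp_all

lemma eps_comm: "\<epsilon> i * x = x * \<epsilon> i"
  unfolding \<epsilon>_def by (rule neg1_comm)

lemma eps_comm2: "x * (\<epsilon> i * y) = \<epsilon> i * (x * y)"
proof -
  have "x * (\<epsilon> i * y) = (x * \<epsilon> i) * y" by (simp only: mult.assoc)
  also have "\<dots> = (\<epsilon> i * x) * y" by (simp only: eps_comm)
  finally show ?thesis by (simp only: mult.assoc)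
qed

lemma dterm_Hc: "k \<le> Suc n \<Longrightarrow> dterm \<rho> n Hc X k = (\<Sum>i<q. \<epsilon> i * E i k)"
proof -
  assume k: "k \<le> Suc n"
  have lX: "length X = Suc n" using Suc_n lenX by simp
  show ?thesis
  proof (cases "k = 0")
    case True
    have "length (drop 1 X) = n" using lX by simp
    then show ?thesis using True
      by (simp add: dterm_def E_def Hc_def sum_distrib_left eps_comm2)
  next
    case k0: False
    show ?thesis
    proof (cases "k = Suc n")
      case True
      have "length (take n X) = n" using lX by simp
      then show ?thesis using True
        by (simp add: dterm_def E_def Hc_def sum_distrib_left sum_distrib_right mult.assoc eps_comm2 del: power_Suc)
    next
      case False
      have "length (merge k X) = n" using lX k k0 False by (simp add: merge_len)
      then show ?thesis using False k0
        by (simp add: dterm_def E_def Hc_def sum_distrib_left eps_comm2)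
    qed
  qed
qed

lemma dHc: "hoch_diff \<rho> n Hc X = - (\<rho>s 0 * L) - \<rho>s q * ((-1) ^ (Suc q) * M)"
proof -
  have lX: "length X = Suc n" using Suc_n lenX by simp
  have "hoch_diff \<rho> n Hc X = (\<Sum>k\<le>Suc n. \<Sum>i<q. \<epsilon> i * E i k)"
    unfolding hoch_diff_dterm[OF lX] by (rule sum.cong) (simp_all add: dterm_Hc)
  also have "\<dots> = (\<Sum>i<q. \<epsilon> i * (\<Sum>k\<le>p + q. E i k))"
    by (subst sum.swap) (simp add: sum_distrib_left Suc_n)
  finally show ?thesis using core_id by simp
qed

end


context lists
begin

lemma Yupd1: "k < i \<Longrightarrow> i + p \<le> length W \<Longrightarrow> Yf i (W[k := x]) = (Yf i W)[k := x]"
  by (simp add: Yf_def list_update_append drop_update_cancel take_update_swap)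

lemma Yupd2: "i \<le> k \<Longrightarrow> k < i + p \<Longrightarrow> i + p \<le> length W \<Longrightarrow>
    Yf i (W[k := x]) = (Yf i W)[i := h ((take p (drop i W))[k - i := x])]"
  by (simp add: Yf_def list_update_append drop_update_swap take_update_swap take_update_cancel drop_update_cancel list_update_beyond)

lemma Yupd3: "i + p \<le> k \<Longrightarrow> k < length W \<Longrightarrow> Yf i (W[k := x]) = (Yf i W)[k + 1 - p := \<sigma> x]"
proof -
  assume a: "i + p \<le> k" "k < length W"
  have 1: "take i (W[k := x]) = take i W" using a by simp
  have 2: "take p (drop i (W[k := x])) = take p (drop i W)" using a by (simp add: drop_update_swap)
  have 3: "drop (i + p) (W[k := x]) = (drop (i + p) W)[k - (i + p) := x]" using a by (simp add: drop_update_swap)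
  have 4: "((take i W @ [h (take p (drop i W))]) @ map \<sigma> (drop (i + p) W))[k + 1 - p := \<sigma> x]
     = (take i W @ [h (take p (drop i W))]) @ (map \<sigma> (drop (i + p) W))[k + 1 - p - length (take i W @ [h (take p (drop i W))]) := \<sigma> x]"
    using a by (subst list_update_append) auto
  have 5: "k + 1 - p - length (take i W @ [h (take p (drop i W))]) = k - (i + p)" using a by simp
  show ?thesis unfolding Yf_def 1 2 3 using 4 unfolding 5 by (simp add: map_update)
qed

end

definition HH :: "('r::ring_1 list \<Rightarrow> 'r) \<Rightarrow> ('r list \<Rightarrow> 'r) \<Rightarrow> ('r \<Rightarrow> 'r) \<Rightarrow> nat \<Rightarrow> nat \<Rightarrow> 'r list \<Rightarrow> 'r" where
  "HH g h \<sigma> p q W = (if length W = p + q - 1 then (\<Sum>i<q. (-1::'r) ^ (i * (p + 1)) * g (lists.Yf h \<sigma> p i W)) else 0)"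

context gsetup
begin

definition homog where "homog x \<longleftrightarrow> (\<exists>d. x \<in> Rg d)"

lemma coch_len: "cochain sm n F \<Longrightarrow> length xs \<noteq> n \<Longrightarrow> F xs = 0"
  unfolding cochain_def by blast

lemma coch_add: "cochain sm n F \<Longrightarrow> length xs = n \<Longrightarrow> k < n \<Longrightarrow> F (xs[k := x + y]) = F (xs[k := x]) + F (xs[k := y])"
  unfolding cochain_def by blast

lemma coch_sm: "cochain sm n F \<Longrightarrow> length xs = n \<Longrightarrow> k < n \<Longrightarrow> F (xs[k := sm c x]) = sm c (F (xs[k := x]))"
  unfolding cochain_def by blast

lemma coch_zero: "cochain sm n F \<Longrightarrow> length xs = n \<Longrightarrow> k < n \<Longrightarrow> F (xs[k := 0]) = 0"
  using coch_sm[of n F xs k 0 0] by simp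

lemma coch_sum: "cochain sm n F \<Longrightarrow> length xs = n \<Longrightarrow> k < n \<Longrightarrow> F (xs[k := sum g S]) = (\<Sum>a\<in>S. F (xs[k := g a]))"
  by (induction S rule: infinite_finite_induct) (simp_all add: coch_zero coch_add)

lemma coch_scale_aux:
  assumes F: "cochain sm n F" and l: "length xs = n"
  shows "k \<le> n \<Longrightarrow> F (map (\<lambda>j. if j < k then sm (c j) (xs ! j) else xs ! j) [0..<n]) = sm (\<Prod>j<k. c j) (F xs)"
proof (induction k)
  case 0
  have "map (\<lambda>j. xs ! j) [0..<n] = xs" using l map_nth[of xs] by simp
  then show ?case by simp
next
  case (Suc k)
  define Z where "Z = map (\<lambda>j. if j < k then sm (c j) (xs ! j) else xs ! j) [0..<n]"
  have lZ: "length Z = n" by (simp add: Z_def)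
  have k: "k < n" using Suc by simp
  have Zk: "Z ! k = xs ! k" using k by (simp add: Z_def)
  have "map (\<lambda>j. if j < Suc k then sm (c j) (xs ! j) else xs ! j) [0..<n] = Z[k := sm (c k) (xs ! k)]"
    using k by (intro nth_equalityI) (auto simp: Z_def nth_list_update)
  then have "F (map (\<lambda>j. if j < Suc k then sm (c j) (xs ! j) else xs ! j) [0..<n]) = sm (c k) (F (Z[k := xs ! k]))"
    using coch_sm[OF F lZ k] by simp
  also have "Z[k := xs ! k] = Z" by (metis Zk list_update_id)
  also have "sm (c k) (F Z) = sm (\<Prod>j<Suc k. c j) (F xs)"
    using Suc k by (simp add: Z_def mult.commute)
  finally show ?case .
qed

lemma coch_scale:
  assumes F: "cochain sm n F" and l: "length xs = n"
  shows "F (map (\<lambda>j. sm (c j) (xs ! j)) [0..<n]) = sm (\<Prod>j<n. c j) (F xs)"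
proof -
  have "map (\<lambda>j. if j < n then sm (c j) (xs ! j) else xs ! j) [0..<n] = map (\<lambda>j. sm (c j) (xs ! j)) [0..<n]"
    by (rule map_cong) auto
  then show ?thesis using coch_scale_aux[OF F l, of n c] by (simp only: order_refl)
qed

lemma t_sum_list: "(\<Prod>j<length ds. t (ds ! j) b) = t (sum_list ds) b"
  by (induction ds) (simp_all add: prod.lessThan_Suc_shift t_add1 t_zero1 del: prod.lessThan_Suc)

lemma multilinear_ext_aux:
  assumes F: "cochain sm n F" and G: "cochain sm n G"
    and H: "\<And>xs. length xs = n \<Longrightarrow> (\<forall>j<n. homog (xs ! j)) \<Longrightarrow> F xs = G xs"
  shows "k \<le> n \<Longrightarrow> length xs = n \<Longrightarrow> (\<forall>j. k \<le> j \<and> j < n \<longrightarrow> homog (xs ! j)) \<Longrightarrow> F xs = G xs"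
proof (induction k arbitrary: xs)
  case 0
  then show ?case using H by auto
next
  case (Suc k)
  have k: "k < n" using Suc by simp
  have e: "xs = xs[k := (\<Sum>a\<in>supp (xs ! k). comp (xs ! k) a)]"
    using comp_sum[of "xs ! k"] by simp
  have "F xs = (\<Sum>a\<in>supp (xs ! k). F (xs[k := comp (xs ! k) a]))"
    by (subst e, rule coch_sum[OF F]) (use Suc k in auto)
  also have "\<dots> = (\<Sum>a\<in>supp (xs ! k). G (xs[k := comp (xs ! k) a]))"
  proof (rule sum.cong[OF refl])
    fix a
    show "F (xs[k := comp (xs ! k) a]) = G (xs[k := comp (xs ! k) a])"
    proof (rule Suc.IH)
      show "k \<le> n" using k by simp
      show "length (xs[k := comp (xs ! k) a]) = n" using Suc by simp
      show "\<forall>j. k \<le> j \<and> j < n \<longrightarrow> homog (xs[k := comp (xs ! k) a] ! j)"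
      proof (intro allI impI)
        fix j assume j: "k \<le> j \<and> j < n"
        show "homog (xs[k := comp (xs ! k) a] ! j)"
        proof (cases "j = k")
          case True
          then show ?thesis using j Suc.prems(2) comp_in unfolding homog_def by auto
        next
          case False
          then show ?thesis using j Suc.prems(3) by auto
        qed
      qed
    qed
  qed
  also have "\<dots> = G xs"
    by (subst (2) e, rule coch_sum[OF G, symmetric]) (use Suc k in auto)
  finally show ?case .
qed

lemma multilinear_ext:
  assumes F: "cochain sm n F" and G: "cochain sm n G"
    and H: "\<And>xs. length xs = n \<Longrightarrow> (\<forall>j<n. homog (xs ! j)) \<Longrightarrow> F xs = G xs"
  shows "F xs = G xs"
proof (cases "length xs = n")
  case True
  have "\<forall>j. n \<le> j \<and> j < n \<longrightarrow> homog (xs ! j)" by auto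
  then show ?thesis using multilinear_ext_aux[OF F G H, of n xs] True by blast
next
  case False
  then show ?thesis using coch_len[OF F] coch_len[OF G] by simp
qed

abbreviation bh where "bh b \<equiv> bhat sm Rg t b"

lemma map_bh_upd: "map (bh b) (xs[k := x]) = (map (bh b) xs)[k := bh b x]"
  by (simp add: map_update)

lemma twist_lemma:
  assumes g: "cochain sm q g" and gd: "cochain_deg Rg q a' g"
  shows "g (map (bh b) W) = sm (inverse (t a' b)) (bh b (g W))"
proof (rule multilinear_ext[where F = "\<lambda>W. g (map (bh b) W)" and G = "\<lambda>W. sm (inverse (t a' b)) (bh b (g W))" and n = q])
  show "cochain sm q (\<lambda>W. g (map (bh b) W))"
    unfolding cochain_def
    using coch_len[OF g] coch_add[OF g] coch_sm[OF g]
    by (auto simp: map_bh_upd bhat_add bhat_sm)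
  show "cochain sm q (\<lambda>W. sm (inverse (t a' b)) (bh b (g W)))"
    unfolding cochain_def
    using coch_len[OF g] coch_add[OF g] coch_sm[OF g]
    by (auto simp: bhat_add bhat_sm bhat_zero V.scale_right_distrib V.scale_left_commute)
  fix xs assume l: "length xs = q" and hom: "\<forall>j<q. homog (xs ! j)"
  define ds where "ds = map (\<lambda>x. SOME d. x \<in> Rg d) xs"
  have lds: "length ds = q" using l by (simp add: ds_def)
  have ds: "\<forall>j<q. xs ! j \<in> Rg (ds ! j)"
    using hom l unfolding ds_def homog_def by (auto intro: someI_ex)
  have "map (bh b) xs = map (\<lambda>j. sm (t (ds ! j) b) (xs ! j)) [0..<q]"
    using l ds by (intro nth_equalityI) (auto simp: bhat_homog)
  then have "g (map (bh b) xs) = sm (t (sum_list ds) b) (g xs)"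
    using coch_scale[OF g l] t_sum_list[of ds b] lds by simp
  moreover have "g xs \<in> Rg (a' + sum_list ds)"
    using gd l lds ds unfolding cochain_deg_def by blast
  ultimately show "g (map (bh b) xs) = sm (inverse (t a' b)) (bh b (g xs))"
    by (simp add: bhat_homog t_add1 t_nz)
qed

lemma Yf_lin:
  assumes h: "cochain sm p h" and g: "cochain sm q g" and i: "i < q"
    and W: "length W = p + q - 1" and k: "k < p + q - 1"
  shows "g (lists.Yf h (bh b) p i (W[k := x + y])) = g (lists.Yf h (bh b) p i (W[k := x])) + g (lists.Yf h (bh b) p i (W[k := y]))"
    and "g (lists.Yf h (bh b) p i (W[k := sm c x])) = sm c (g (lists.Yf h (bh b) p i (W[k := x])))"
proof -
  let ?Y = "lists.Yf h (bh b) p i W"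
  let ?V = "take p (drop i W)"
  have lY: "length ?Y = q" using i W lists.len_Yf[of i p W h "bh b"] by simp
  have lV: "length ?V = p" using i W by simp
  have ip: "i + p \<le> length W" using i W by simp
  have "g (lists.Yf h (bh b) p i (W[k := x + y])) = g (lists.Yf h (bh b) p i (W[k := x])) + g (lists.Yf h (bh b) p i (W[k := y])) \<and>
        g (lists.Yf h (bh b) p i (W[k := sm c x])) = sm c (g (lists.Yf h (bh b) p i (W[k := x])))"
  proof (cases "k < i")
    case True
    then show ?thesis using ip lY i by (simp add: lists.Yupd1 coch_add[OF g] coch_sm[OF g])
  next
    case F1: False
    show ?thesis
    proof (cases "k < i + p")
      case True
      have kk: "k - i < p" using True F1 by simp
      show ?thesis using F1 True ip
        by (simp add: lists.Yupd2 coch_add[OF h lV kk] coch_sm[OF h lV kk] coch_add[OF g lY i] coch_sm[OF g lY i])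
    next
      case False
      have kk: "Suc k - p < q" using k False by simp
      show ?thesis using F1 False k W
        by (simp add: lists.Yupd3 bhat_add bhat_sm coch_add[OF g lY kk] coch_sm[OF g lY kk])
    qed
  qed
  then show "g (lists.Yf h (bh b) p i (W[k := x + y])) = g (lists.Yf h (bh b) p i (W[k := x])) + g (lists.Yf h (bh b) p i (W[k := y]))"
    and "g (lists.Yf h (bh b) p i (W[k := sm c x])) = sm c (g (lists.Yf h (bh b) p i (W[k := x])))" by auto
qed

lemma HH_cochain:
  assumes h: "cochain sm p h" and g: "cochain sm q g"
  shows "cochain sm (p + q - 1) (HH g h (bh b) p q)"
  unfolding cochain_def
proof (intro conjI allI impI)
  fix xs :: "'r list" assume "length xs \<noteq> p + q - 1"
  then show "HH g h (bh b) p q xs = 0" by (simp add: HH_def)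
next
  fix xs :: "'r list" and i x y assume l: "length xs = p + q - 1" and i: "i < p + q - 1"
  show "HH g h (bh b) p q (xs[i := x + y]) = HH g h (bh b) p q (xs[i := x]) + HH g h (bh b) p q (xs[i := y])"
    using l i by (simp add: HH_def Yf_lin[OF h g] distrib_left sum.distrib)
  fix c
  show "HH g h (bh b) p q (xs[i := sm c x]) = sm c (HH g h (bh b) p q (xs[i := x]))"
    using l i by (simp add: HH_def Yf_lin[OF h g] V.scale_sum_right sm_mult2)
qed

lemma sign_Rg: "x \<in> Rg d \<Longrightarrow> (-1) ^ k * x \<in> Rg d"
  by (cases "even k") (simp_all add: Rg_uminus)

lemma HH_deg:
  assumes h: "cochain_deg Rg p a h" and g: "cochain_deg Rg q a' g"
  shows "cochain_deg Rg (p + q - 1) (a + a') (HH g h (bh b) p q)"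
  unfolding cochain_deg_def
proof (intro allI impI)
  fix xs ds assume l: "length xs = p + q - 1" and ld: "length ds = p + q - 1"
    and hom: "\<forall>j<p + q - 1. xs ! j \<in> Rg (ds ! j)"
  show "HH g h (bh b) p q xs \<in> Rg (a + a' + sum_list ds)"
  proof (cases "q = 0")
    case True then show ?thesis by (simp add: HH_def Rg0)
  next
    case False
    have "g (lists.Yf h (bh b) p i xs) \<in> Rg (a + a' + sum_list ds)" if i: "i < q" for i
    proof -
      define ds' where "ds' = take i ds @ [a + sum_list (take p (drop i ds))] @ drop (i + p) ds"
      have lY: "length (lists.Yf h (bh b) p i xs) = q" using i l lists.len_Yf[of i p xs h "bh b"] by simp
      have lds': "length ds' = q" using i ld by (simp add: ds'_def)
      have hin: "h (take p (drop i xs)) \<in> Rg (a + sum_list (take p (drop i ds)))"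
        using h unfolding cochain_deg_def
        using i l ld hom by (auto simp: add.commute add.left_commute)
      have "\<forall>j<q. lists.Yf h (bh b) p i xs ! j \<in> Rg (ds' ! j)"
      proof (intro allI impI)
        fix j assume j: "j < q"
        show "lists.Yf h (bh b) p i xs ! j \<in> Rg (ds' ! j)"
        proof (cases "j < i")
          case True then show ?thesis using hom i l ld j by (simp add: lists.Yf_def ds'_def nth_append)
        next
          case F: False
          show ?thesis
          proof (cases "j = i")
            case True then show ?thesis using hin i l ld by (simp add: lists.Yf_def ds'_def nth_append)
          next
            case False
            then have "j - i = Suc (j - i - 1)" using F by simp
            then show ?thesis using F False hom i l ld j
              by (simp add: lists.Yf_def ds'_def nth_append bhat_Rg)
          qed
        qed
      qed
      then have "g (lists.Yf h (bh b) p i xs) \<in> Rg (a' + sum_list ds')"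
        using g lY lds' unfolding cochain_deg_def by blast
      moreover have "sum_list ds = sum_list (take i ds) + sum_list (take p (drop i ds)) + sum_list (drop (i + p) ds)"
      proof -
        have "ds = take i ds @ take p (drop i ds) @ drop p (drop i ds)"
          by (metis append_take_drop_id)
        then have "sum_list ds = sum_list (take i ds) + (sum_list (take p (drop i ds)) + sum_list (drop p (drop i ds)))"
          by (metis sum_list_append)
        then show ?thesis by (simp add: add.assoc add.commute)
      qed
      ultimately show ?thesis by (simp add: ds'_def algebra_simps)
    qed
    then show ?thesis using l unfolding HH_def by (auto intro!: Rg_sum sign_Rg)
  qed
qed

lemma hoch_diff_sm: "hoch_diff \<rho> N (\<lambda>W. sm c (F W)) xs = sm c (hoch_diff \<rho> N F xs)"
  by (simp add: hoch_diff_def V.scale_right_distrib V.scale_right_diff_distrib V.scale_sum_right sm_mult1[symmetric] sm_mult2[symmetric])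

lemma hoch_diff_zero: "hoch_diff \<rho> N (\<lambda>W. 0) xs = 0"
  by (simp add: hoch_diff_def)

lemma final_alg:
  fixes PP M :: 'r and tt :: 'k
  assumes tt: "tt \<noteq> 0"
  shows "(-1) ^ (p * q) * PP - sm ((-1) ^ (p * q) * tt) ((-1) ^ (q * p) * M)
    = sm ((-1) ^ (p + p * q) * tt) (- ((-1) ^ ((0 + 1) * (p + 1)) * sm (inverse tt) PP) - (-1) ^ ((q + 1) * (p + 1)) * ((-1) ^ (Suc q) * M))"
proof -
  have e: "sm tt (sm (inverse tt) PP) = PP" using tt by simp
  show ?thesis
    by (cases "even p"; cases "even q")
       (simp_all add: tt V.scale_right_diff_distrib V.scale_minus_left V.scale_right_distrib algebra_simps)
qed

lemma main_identity:
  assumes f: "hoch_cocycle sm Rg (bh b) m a f" and f': "hoch_cocycle sm Rg (bh b') m' a' f'"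
    and q: "1 \<le> m'"
  shows "twisted_cup sm Rg t m b f m' f' X - sm ((-1) ^ (m * m') * t a' b) (twisted_cup sm Rg t m' b' f' m f X)
     = hoch_diff (bh (b + b')) (m + m' - 1) (\<lambda>W. sm ((-1) ^ (m + m * m') * t a' b) (HH f' f (bh b) m m' W)) X"
proof (cases "length X = m + m'")
  case False
  then show ?thesis using q by (simp add: twisted_cup_def hoch_diff_def)
next
  case True
  have fc: "cochain sm m f" and fd: "cochain_deg Rg m a f" and fz: "hoch_diff (bh b) m f = (\<lambda>_. 0)"
    using f unfolding hoch_cocycle_def by auto
  have gc: "cochain sm m' f'" and gd: "cochain_deg Rg m' a' f'" and gz: "hoch_diff (bh b') m' f' = (\<lambda>_. 0)"
    using f' unfolding hoch_cocycle_def by auto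
  interpret C: core f "bh b" m f' "bh b'" m' X
  proof
    show "\<And>W i x y. length W = m' \<Longrightarrow> i < m' \<Longrightarrow> f' (W[i := x + y]) = f' (W[i := x]) + f' (W[i := y])"
      using coch_add[OF gc] by blast
    show "\<And>W i. length W = m' \<Longrightarrow> i < m' \<Longrightarrow> f' (W[i := 0]) = 0"
      using coch_zero[OF gc] by blast
    show "\<And>x y. bh b (x * y) = bh b x * bh b y" by (rule bhat_mult)
    show "\<And>Y. length Y = Suc m' \<Longrightarrow> hoch_diff (bh b') m' f' Y = 0" using gz by simp
    show "\<And>V. length V = Suc m \<Longrightarrow> hoch_diff (bh b) m f V = 0" using fz by simp
    show "1 \<le> m'" by (rule q)
    show "length X = m + m'" by (rule True)
  qed
  have rho: "C.\<rho> = bh (b + b')" by (rule ext) (simp add: C.\<rho>_def bhat_comp2)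
  have Hc: "C.Hc = HH f' f (bh b) m m'"
    by (rule ext) (simp add: C.Hc_def HH_def C.n_def C.Hi_def C.\<epsilon>_def)
  have n: "C.n = m + m' - 1" by (simp add: C.n_def)
  have L: "C.L = sm (inverse (t a' b)) (f (take m X) * bh b (f' (drop m X)))"
    unfolding C.L_def twist_lemma[OF gc gd] by (simp add: sm_mult2)
  have tc1: "twisted_cup sm Rg t m b f m' f' X = (-1) ^ (m * m') * (f (take m X) * bh b (f' (drop m X)))"
    using True by (simp add: twisted_cup_def)
  have tc2: "twisted_cup sm Rg t m' b' f' m f X = (-1) ^ (m' * m) * C.M"
    using True by (simp add: twisted_cup_def C.M_def)
  have "hoch_diff (bh (b + b')) (m + m' - 1) (\<lambda>W. sm ((-1) ^ (m + m * m') * t a' b) (HH f' f (bh b) m m' W)) X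
     = sm ((-1) ^ (m + m * m') * t a' b) (hoch_diff C.\<rho> C.n C.Hc X)"
    unfolding hoch_diff_sm rho Hc n ..
  also have "\<dots> = sm ((-1) ^ (m + m * m') * t a' b) (- (C.\<rho>s 0 * C.L) - C.\<rho>s m' * ((-1) ^ (Suc m') * C.M))"
    by (simp only: C.dHc)
  finally show ?thesis
    unfolding tc1 tc2 L C.\<rho>s_def using final_alg[OF t_nz, where p=m and q=m' and PP="f (take m X) * bh b (f' (drop m X))" and M=C.M] by simp
qed

end


context gsetup
begin

lemma hoch_diff_add: "hoch_diff \<rho> N (\<lambda>W. F W + G W) xs = hoch_diff \<rho> N F xs + hoch_diff \<rho> N G xs"
  by (simp add: hoch_diff_def distrib_left distrib_right sum.distrib algebra_simps)

lemma cochain_add: "cochain sm n F \<Longrightarrow> cochain sm n G \<Longrightarrow> cochain sm n (\<lambda>W. F W + G W)"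
  unfolding cochain_def by (auto simp: algebra_simps V.scale_right_distrib)

lemma cochain_sm: "cochain sm n F \<Longrightarrow> cochain sm n (\<lambda>W. sm c (F W))"
  unfolding cochain_def by (auto simp: V.scale_right_distrib V.scale_left_commute)

lemma cochain_0: "cochain sm n (\<lambda>W. 0)"
  unfolding cochain_def by simp

lemma deg_add: "cochain_deg Rg n A F \<Longrightarrow> cochain_deg Rg n A G \<Longrightarrow> cochain_deg Rg n A (\<lambda>W. F W + G W)"
  unfolding cochain_deg_def by (auto intro: Rg_add)

lemma deg_sm: "cochain_deg Rg n A F \<Longrightarrow> cochain_deg Rg n A (\<lambda>W. sm c (F W))"
  unfolding cochain_deg_def by (auto intro: Rg_sm)

lemma deg_0: "cochain_deg Rg n A (\<lambda>W. 0)"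
  unfolding cochain_deg_def by (auto intro: Rg0)

definition Bd where "Bd \<rho> N A F \<longleftrightarrow> (if N = 0 then F = (\<lambda>_. 0)
   else (\<exists>h. cochain sm (N - 1) h \<and> cochain_deg Rg (N - 1) A h \<and> F = hoch_diff \<rho> (N - 1) h))"

lemma coh_Bd: "hoch_cohomologous sm Rg \<rho> N A F G \<longleftrightarrow> Bd \<rho> N A (\<lambda>xs. F xs - G xs)"
  unfolding hoch_cohomologous_def Bd_def by (auto simp: fun_eq_iff)

lemma Bd_add: "Bd \<rho> N A F \<Longrightarrow> Bd \<rho> N A G \<Longrightarrow> Bd \<rho> N A (\<lambda>xs. F xs + G xs)"
proof -
  assume F: "Bd \<rho> N A F" and G: "Bd \<rho> N A G"
  show ?thesis
  proof (cases "N = 0")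
    case True then show ?thesis using F G by (simp add: Bd_def)
  next
    case False
    then obtain h1 h2 where h1: "cochain sm (N - 1) h1" "cochain_deg Rg (N - 1) A h1" "F = hoch_diff \<rho> (N - 1) h1"
      and h2: "cochain sm (N - 1) h2" "cochain_deg Rg (N - 1) A h2" "G = hoch_diff \<rho> (N - 1) h2"
      using F G unfolding Bd_def by auto
    have "cochain sm (N - 1) (\<lambda>W. h1 W + h2 W) \<and> cochain_deg Rg (N - 1) A (\<lambda>W. h1 W + h2 W) \<and>
      (\<lambda>xs. F xs + G xs) = hoch_diff \<rho> (N - 1) (\<lambda>W. h1 W + h2 W)"
      using cochain_add[OF h1(1) h2(1)] deg_add[OF h1(2) h2(2)] h1(3) h2(3) by (simp add: hoch_diff_add fun_eq_iff)
    then show ?thesis unfolding Bd_def using False by auto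
  qed
qed

lemma Bd_sm: "Bd \<rho> N A F \<Longrightarrow> Bd \<rho> N A (\<lambda>xs. sm c (F xs))"
proof -
  assume F: "Bd \<rho> N A F"
  show ?thesis
  proof (cases "N = 0")
    case True then show ?thesis using F by (simp add: Bd_def)
  next
    case False
    then obtain h1 where h1: "cochain sm (N - 1) h1" "cochain_deg Rg (N - 1) A h1" "F = hoch_diff \<rho> (N - 1) h1"
      using F unfolding Bd_def by auto
    have "cochain sm (N - 1) (\<lambda>W. sm c (h1 W)) \<and> cochain_deg Rg (N - 1) A (\<lambda>W. sm c (h1 W)) \<and>
      (\<lambda>xs. sm c (F xs)) = hoch_diff \<rho> (N - 1) (\<lambda>W. sm c (h1 W))"
      using cochain_sm[OF h1(1)] deg_sm[OF h1(2)] h1(3) by (simp add: hoch_diff_sm fun_eq_iff)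
    then show ?thesis unfolding Bd_def using False by auto
  qed
qed

lemma Bd_cong: "Bd \<rho> N A F \<Longrightarrow> (\<And>xs. F xs = G xs) \<Longrightarrow> Bd \<rho> N A G"
proof -
  assume "Bd \<rho> N A F" "\<And>xs. F xs = G xs"
  then have "F = G" by auto
  then show ?thesis using \<open>Bd \<rho> N A F\<close> by simp
qed

lemma q0_identity:
  assumes f: "hoch_cocycle sm Rg (bh b) m a f" and f': "hoch_cocycle sm Rg (bh b') 0 a' f'"
  shows "twisted_cup sm Rg t m b f 0 f' X = sm (t a' b) (twisted_cup sm Rg t 0 b' f' m f X)"
proof (cases "length X = m")
  case False then show ?thesis by (simp add: twisted_cup_def)
next
  case True
  have gd: "cochain_deg Rg 0 a' f'" and gz: "hoch_diff (bh b') 0 f' = (\<lambda>_. 0)"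
    using f' unfolding hoch_cocycle_def by auto
  have g0: "f' [] \<in> Rg a'" using gd unfolding cochain_deg_def by auto
  have "hoch_diff (bh b') 0 f' [f X] = 0" using gz by simp
  then have comm: "f X * f' [] = f' [] * bh b' (f X)"
    by (simp add: hoch_diff_def)
  show ?thesis using True
    by (simp add: twisted_cup_def bhat_homog[OF g0] sm_mult2[symmetric] comm)
qed

lemma part1:
  assumes f: "hoch_cocycle sm Rg (bh b) m a f" and f': "hoch_cocycle sm Rg (bh b') m' a' f'"
  shows "hoch_cohomologous sm Rg (bh (b + b')) (m + m') (a + a')
           (twisted_cup sm Rg t m b f m' f')
           (\<lambda>xs. sm ((-1) ^ (m * m') * t a' b) (twisted_cup sm Rg t m' b' f' m f xs))"
proof (cases "m' = 0")
  case True
  have eq: "twisted_cup sm Rg t m b f m' f' X - sm ((-1) ^ (m * m') * t a' b) (twisted_cup sm Rg t m' b' f' m f X) = 0" for X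
  proof -
    have f0: "hoch_cocycle sm Rg (bh b') 0 a' f'" using f' True by simp
    show ?thesis using q0_identity[OF f f0, where X = X] True by simp
  qed
  show ?thesis
  proof (cases "m + m' = 0")
    case True then show ?thesis
      using eq by (simp add: fun_eq_iff hoch_cohomologous_def)
  next
    case False
    have "cochain sm (m + m' - 1) (\<lambda>W. 0) \<and> cochain_deg Rg (m + m' - 1) (a + a') (\<lambda>W. 0) \<and>
      (\<lambda>xs. twisted_cup sm Rg t m b f m' f' xs - sm ((-1) ^ (m * m') * t a' b) (twisted_cup sm Rg t m' b' f' m f xs))
        = hoch_diff (bh (b + b')) (m + m' - 1) (\<lambda>W. 0)"
      using eq by (simp add: cochain_0 deg_0 hoch_diff_zero fun_eq_iff)
    then show ?thesis unfolding hoch_cohomologous_def if_not_P[OF False] by blast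
  qed
next
  case False
  have fc: "cochain sm m f" and fd: "cochain_deg Rg m a f"
    using f unfolding hoch_cocycle_def by auto
  have gc: "cochain sm m' f'" and gd: "cochain_deg Rg m' a' f'"
    using f' unfolding hoch_cocycle_def by auto
  let ?H = "\<lambda>W. sm ((-1) ^ (m + m * m') * t a' b) (HH f' f (bh b) m m' W)"
  have "cochain sm (m + m' - 1) ?H" by (rule cochain_sm[OF HH_cochain[OF fc gc]])
  moreover have "cochain_deg Rg (m + m' - 1) (a + a') ?H" by (rule deg_sm[OF HH_deg[OF fd gd]])
  moreover have "(\<lambda>xs. twisted_cup sm Rg t m b f m' f' xs - sm ((-1) ^ (m * m') * t a' b) (twisted_cup sm Rg t m' b' f' m f xs))
     = hoch_diff (bh (b + b')) (m + m' - 1) ?H"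
    using main_identity[OF f f'] False by (simp add: fun_eq_iff)
  ultimately show ?thesis unfolding hoch_cohomologous_def using False by auto
qed

lemma part2:
  assumes f: "hoch_cocycle sm Rg (bh b) m a f" and f': "hoch_cocycle sm Rg (bh b') m' a' f'"
    and ne: "t a' b \<noteq> inverse (t a b')"
  shows "hoch_cohomologous sm Rg (bh (b + b')) (m + m') (a + a') (twisted_cup sm Rg t m b f m' f') (\<lambda>_. 0)"
proof -
  let ?\<rho> = "bh (b + b')" and ?N = "m + m'" and ?A = "a + a'"
  let ?c1 = "twisted_cup sm Rg t m b f m' f'" and ?c2 = "twisted_cup sm Rg t m' b' f' m f"
  let ?s = "(-1::'k) ^ (m * m')" and ?t1 = "t a' b" and ?t2 = "t a b'"
  have B1: "Bd ?\<rho> ?N ?A (\<lambda>xs. ?c1 xs - sm (?s * ?t1) (?c2 xs))"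
    using part1[OF f f'] unfolding coh_Bd .
  have "hoch_cohomologous sm Rg (bh (b' + b)) (m' + m) (a' + a) ?c2 (\<lambda>xs. sm ((-1) ^ (m' * m) * t a b') (?c1 xs))"
    by (rule part1[OF f' f])
  then have B2: "Bd ?\<rho> ?N ?A (\<lambda>xs. ?c2 xs - sm (?s * ?t2) (?c1 xs))"
    unfolding coh_Bd by (simp add: add.commute mult.commute)
  have B3: "Bd ?\<rho> ?N ?A (\<lambda>xs. (?c1 xs - sm (?s * ?t1) (?c2 xs)) + sm (?s * ?t1) (?c2 xs - sm (?s * ?t2) (?c1 xs)))"
    by (rule Bd_add[OF B1 Bd_sm[OF B2]])
  have ss: "?s * ?s = 1" by (cases "even (m * m')") simp_all
  have B4: "Bd ?\<rho> ?N ?A (\<lambda>xs. sm (1 - ?t1 * ?t2) (?c1 xs))"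
  proof (rule Bd_cong[OF B3])
    fix xs
    have "sm (?s * ?t1) (sm (?s * ?t2) (?c1 xs)) = sm ((?s * ?s) * (?t1 * ?t2)) (?c1 xs)"
      by (simp add: ac_simps)
    then show "(?c1 xs - sm (?s * ?t1) (?c2 xs)) + sm (?s * ?t1) (?c2 xs - sm (?s * ?t2) (?c1 xs)) = sm (1 - ?t1 * ?t2) (?c1 xs)"
      by (simp add: ss V.scale_right_diff_distrib V.scale_left_diff_distrib)
  qed
  have nz: "1 - ?t1 * ?t2 \<noteq> 0"
  proof
    assume "1 - ?t1 * ?t2 = 0"
    then have "?t1 * ?t2 = 1" by simp
    then have "?t1 = inverse ?t2" using t_nz[of a b'] by (simp add: field_simps)
    then show False using ne by simp
  qed
  have "Bd ?\<rho> ?N ?A (\<lambda>xs. sm (inverse (1 - ?t1 * ?t2)) (sm (1 - ?t1 * ?t2) (?c1 xs)))"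
    by (rule Bd_sm[OF B4])
  then have "Bd ?\<rho> ?N ?A (\<lambda>xs. ?c1 xs - 0)"
    by (rule Bd_cong) (simp add: left_inverse[OF nz])
  then show ?thesis unfolding coh_Bd .
qed

end

theorem proposition4p1:
  fixes sm :: "'k::field \<Rightarrow> 'r::ring_1 \<Rightarrow> 'r"
    and Rg :: "'a::ab_group_add \<Rightarrow> 'r set"
    and t :: "'a \<Rightarrow> 'b::ab_group_add \<Rightarrow> 'k"
    and f f' :: "'r list \<Rightarrow> 'r"
    and m m' :: nat and a a' :: 'a and b b' :: 'b
  assumes "graded_k_algebra sm Rg"
    and "bicharacter t"
    and "hoch_cocycle sm Rg (bhat sm Rg t b) m a f"
    and "hoch_cocycle sm Rg (bhat sm Rg t b') m' a' f'"
  shows "hoch_cohomologous sm Rg (bhat sm Rg t (b + b')) (m + m') (a + a')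
           (twisted_cup sm Rg t m b f m' f')
           (\<lambda>xs. sm ((-1) ^ (m * m') * t a' b) (twisted_cup sm Rg t m' b' f' m f xs))
       \<and> (t a' b \<noteq> inverse (t a b') \<longrightarrow>
           hoch_cohomologous sm Rg (bhat sm Rg t (b + b')) (m + m') (a + a')
             (twisted_cup sm Rg t m b f m' f') (\<lambda>_. 0))"
proof -
  interpret G: gsetup sm Rg t by (unfold_locales) (use assms in auto)
  show ?thesis using G.part1[OF assms(3,4)] G.part2[OF assms(3,4)] by blast
qed

end
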